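(* Assume $M$ is compact and $(t,x,y)\mapsto c_t(x,y)$ is continuous on $(0,\infty)\times M\times M$. Then for each $a>0$ the family $\{c_t\mid t\ge a\}$ is equicontinuous on $M\times M$. Moreover, there is a constant $h$ (independent of $a$) and, for each $a>0$, a constant $K$ such that $|c_t(x,y)-ht|\le K$ for all $t\ge a$ and all $x,y\in M$.
   Context: $c_t(x,y)$ is the optimal control cost $\inf\int_0^tL(x(s),u(s))ds$ for the control-affine system $\dot x=X_0(x)+\sum_iu_iX_i(x)$ on $M$ with smooth Lagrangian $L$, the infimum over admissible pairs with $x(0)=x$, $x(t)=y$. Equicontinuity is with respect to a fixed Riemannian distance $d$ on $M$. *)

theory Defs
  imports "HOL-Analysis.Analysis"
begin

text \<open>D vs is the iterated directional derivative of f
  along the directions in the list vs (the head of the list is the last derivative taken).\<close>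
definition C_inf_on :: "'a::euclidean_space set \<Rightarrow> ('a \<Rightarrow> 'b::euclidean_space) \<Rightarrow> bool" where
  "C_inf_on U f \<longleftrightarrow> open U \<and> (\<exists>D :: 'a list \<Rightarrow> 'a \<Rightarrow> 'b.
      (\<forall>x\<in>U. D [] x = f x) \<and>
      (\<forall>vs. continuous_on U (D vs)) \<and>
      (\<forall>vs v x. x \<in> U \<longrightarrow>
          ((\<lambda>s. D vs (x + s *\<^sub>R v)) has_vector_derivative D (v # vs) x) (at 0)))"

definition smooth_submanifold :: "'a::euclidean_space set \<Rightarrow> bool" where
  "smooth_submanifold M \<longleftrightarrow> (\<forall>p\<in>M. \<exists>U V S (\<phi>::'a\<Rightarrow>'a) (\<psi>::'a\<Rightarrow>'a).
      p \<in> U \<and> open U \<and> open V \<and> subspace S \<and>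
      C_inf_on U \<phi> \<and> C_inf_on V \<psi> \<and> \<phi> ` U = V \<and>
      (\<forall>x\<in>U. \<psi> (\<phi> x) = x) \<and> (\<forall>y\<in>V. \<phi> (\<psi> y) = y) \<and>
      \<phi> ` (M \<inter> U) = V \<inter> S)"

definition tangent_vector :: "'a::euclidean_space set \<Rightarrow> 'a \<Rightarrow> 'a \<Rightarrow> bool" where
  "tangent_vector M p v \<longleftrightarrow> (\<exists>\<gamma> e. e > 0 \<and> \<gamma> 0 = p \<and> (\<forall>s\<in>{-e<..<e}. \<gamma> s \<in> M) \<and>
      (\<gamma> has_vector_derivative v) (at 0))"

definition smooth_vector_field_on :: "'a::euclidean_space set \<Rightarrow> ('a \<Rightarrow> 'a) \<Rightarrow> bool" where
  "smooth_vector_field_on M Y \<longleftrightarrow> C_inf_on UNIV Y \<and> (\<forall>p\<in>M. tangent_vector M p (Y p))"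

text \<open>Admissible pairs (trajectory, control) on [0,t] from x to y for the control-affine
  system  x' = X0 x + sum_i u_i X_i x  on M (Caratheodory solutions, L^1 controls,
  integrable cost).\<close>
definition admissible ::
  "'a::euclidean_space set \<Rightarrow> ('a \<Rightarrow> 'a) \<Rightarrow> ('m::finite \<Rightarrow> 'a \<Rightarrow> 'a) \<Rightarrow> ('a \<times> (real^'m) \<Rightarrow> real)
   \<Rightarrow> real \<Rightarrow> 'a \<Rightarrow> 'a \<Rightarrow> (real \<Rightarrow> 'a) \<Rightarrow> (real \<Rightarrow> real^'m) \<Rightarrow> bool" where
  "admissible M X0 X L t x y \<gamma> u \<longleftrightarrow>
     u absolutely_integrable_on {0..t} \<and>
     (\<lambda>s. X0 (\<gamma> s) + (\<Sum>i\<in>UNIV. (u s $ i) *\<^sub>R X i (\<gamma> s))) absolutely_integrable_on {0..t} \<and>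
     (\<lambda>s. L (\<gamma> s, u s)) absolutely_integrable_on {0..t} \<and>
     (\<forall>s\<in>{0..t}. \<gamma> s \<in> M) \<and> \<gamma> 0 = x \<and> \<gamma> t = y \<and>
     (\<forall>s\<in>{0..t}. \<gamma> s = x + integral {0..s} (\<lambda>r. X0 (\<gamma> r) + (\<Sum>i\<in>UNIV. (u r $ i) *\<^sub>R X i (\<gamma> r))))"

text \<open>Optimal control cost c_t(x,y) (value +infinity if there is no admissible pair).\<close>
definition ctrl_cost ::
  "'a::euclidean_space set \<Rightarrow> ('a \<Rightarrow> 'a) \<Rightarrow> ('m::finite \<Rightarrow> 'a \<Rightarrow> 'a) \<Rightarrow> ('a \<times> (real^'m) \<Rightarrow> real)
   \<Rightarrow> real \<Rightarrow> 'a \<Rightarrow> 'a \<Rightarrow> ereal" where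
  "ctrl_cost M X0 X L t x y =
     (INF p \<in> {(\<gamma>, u). admissible M X0 X L t x y \<gamma> u}.
        ereal (integral {0..t} (\<lambda>s. L (fst p s, snd p s))))"

end

theory Submission
  imports Defs
begin


lemma shift_int:
  fixes f :: "real \<Rightarrow> 'b::euclidean_space"
  shows "(\<lambda>r. f (r+t)) absolutely_integrable_on {0..s} \<longleftrightarrow> f absolutely_integrable_on {t..t+s}"
    and "integral {0..s} (\<lambda>r. f (r+t)) = integral {t..t+s} f"
proof -
  have e1: "(\<lambda>r. f (r+t)) = f \<circ> (+) t" by (auto simp: add.commute)
  have e2: "(\<lambda>r. norm (f (r+t))) = (\<lambda>r. norm (f r)) \<circ> (+) t" by (auto simp: add.commute)
  show "(\<lambda>r. f (r+t)) absolutely_integrable_on {0..s} \<longleftrightarrow> f absolutely_integrable_on {t..t+s}"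
  proof -
    have a: "(\<lambda>r. f (r+t)) integrable_on {0..s} \<longleftrightarrow> f integrable_on {t..t+s}"
      using integrable_on_shift_Icc_real[of f t 0 s] e1 by (simp add: add.commute)
    have b: "(\<lambda>r. norm (f (r+t))) integrable_on {0..s} \<longleftrightarrow> (\<lambda>r. norm (f r)) integrable_on {t..t+s}"
      using integrable_on_shift_Icc_real[of "\<lambda>r. norm (f r)" t 0 s] e2 by (simp add: add.commute)
    show ?thesis unfolding absolutely_integrable_on_def using a b by simp
  qed
  show "integral {0..s} (\<lambda>r. f (r+t)) = integral {t..t+s} f"
    unfolding e1 integral_shift_Icc_real by (simp add: add.commute)
qed

lemma split_int:
  fixes f :: "real \<Rightarrow> 'b::euclidean_space"
  assumes f: "f absolutely_integrable_on {0..t+s}" and "0 \<le> t" "0 \<le> s"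
  shows "f absolutely_integrable_on {0..t}"
    and "(\<lambda>r. f (r+t)) absolutely_integrable_on {0..s}"
    and "integral {0..t+s} f = integral {0..t} f + integral {0..s} (\<lambda>r. f (r+t))"
proof -
  show "f absolutely_integrable_on {0..t}"
    using absolutely_integrable_on_subinterval[OF f] assms by auto
  have "f absolutely_integrable_on {t..t+s}"
    using absolutely_integrable_on_subinterval[OF f] assms by auto
  then show "(\<lambda>r. f (r+t)) absolutely_integrable_on {0..s}" using shift_int(1) by blast
  have "f integrable_on {0..t+s}" using f absolutely_integrable_on_def by blast
  then show "integral {0..t+s} f = integral {0..t} f + integral {0..s} (\<lambda>r. f (r+t))"
    using Henstock_Kurzweil_Integration.integral_combine[where a=0 and c=t and b="t+s" and f=f] assms shift_int(2)[where f=f and t=t and s=s] by simp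
qed

lemma concat_int:
  fixes f g :: "real \<Rightarrow> 'b::euclidean_space"
  assumes f: "f absolutely_integrable_on {0..t}" and g: "g absolutely_integrable_on {0..s}"
    and "0 \<le> t" "0 \<le> s"
  defines "h \<equiv> (\<lambda>r. if r \<le> t then f r else g (r - t))"
  shows "h absolutely_integrable_on {0..t+s}"
    and "integral {0..t+s} h = integral {0..t} f + integral {0..s} g"
proof -
  have h1: "h absolutely_integrable_on {0..t}"
    by (rule absolutely_integrable_spike[OF f negligible_empty]) (auto simp: h_def)
  have g': "(\<lambda>r. g (r - t)) absolutely_integrable_on {t..t+s}"
    using g shift_int(1)[where f="\<lambda>r. g (r - t)" and t=t and s=s] by simp
  have h2: "h absolutely_integrable_on {t..t+s}"
    by (rule absolutely_integrable_spike[OF g' negligible_sing[of t]]) (auto simp: h_def)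
  have U: "{0..t} \<union> {t..t+s} = {0..t+s}" using assms by auto
  show hi: "h absolutely_integrable_on {0..t+s}"
    using absolutely_integrable_Un[OF h1 h2] U by simp
  have i1: "integral {0..t} h = integral {0..t} f"
    by (rule integral_spike[OF negligible_empty]) (auto simp: h_def)
  have i2: "integral {t..t+s} h = integral {t..t+s} (\<lambda>r. g (r - t))"
    by (rule integral_spike[OF negligible_sing[of t]]) (auto simp: h_def)
  have i3: "integral {t..t+s} (\<lambda>r. g (r - t)) = integral {0..s} g"
    using shift_int(2)[where f="\<lambda>r. g (r - t)" and t=t and s=s] by simp
  have "h integrable_on {0..t+s}" using hi absolutely_integrable_on_def by blast
  then show "integral {0..t+s} h = integral {0..t} f + integral {0..s} g"
    using Henstock_Kurzweil_Integration.integral_combine[where a=0 and c=t and b="t+s" and f=h] assms i1 i2 i3 by simp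
qed



definition flow :: "('a::euclidean_space \<Rightarrow> 'a) \<Rightarrow> ('m::finite \<Rightarrow> 'a \<Rightarrow> 'a) \<Rightarrow> (real \<Rightarrow> 'a) \<Rightarrow> (real \<Rightarrow> real^'m) \<Rightarrow> real \<Rightarrow> 'a"
  where "flow X0 X \<gamma> u = (\<lambda>s. X0 (\<gamma> s) + (\<Sum>i\<in>UNIV. (u s $ i) *\<^sub>R X i (\<gamma> s)))"

lemma admissible_alt:
  "admissible M X0 X L t x y \<gamma> u \<longleftrightarrow>
     u absolutely_integrable_on {0..t} \<and>
     flow X0 X \<gamma> u absolutely_integrable_on {0..t} \<and>
     (\<lambda>s. L (\<gamma> s, u s)) absolutely_integrable_on {0..t} \<and>
     (\<forall>s\<in>{0..t}. \<gamma> s \<in> M) \<and> \<gamma> 0 = x \<and> \<gamma> t = y \<and>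
     (\<forall>s\<in>{0..t}. \<gamma> s = x + integral {0..s} (flow X0 X \<gamma> u))"
  unfolding admissible_def flow_def by (rule refl)

lemma flow_shift: "flow X0 X (\<lambda>r. \<gamma> (r+t)) (\<lambda>r. u (r+t)) = (\<lambda>r. flow X0 X \<gamma> u (r+t))"
  unfolding flow_def by (rule refl)

lemma flow_if: "flow X0 X (\<lambda>r. if r \<le> t then \<gamma>1 r else \<gamma>2 (r - t)) (\<lambda>r. if r \<le> t then u1 r else u2 (r - t))
   = (\<lambda>r. if r \<le> t then flow X0 X \<gamma>1 u1 r else flow X0 X \<gamma>2 u2 (r - t))"
  unfolding flow_def by (rule ext) simp



lemma adm_split:
  assumes A: "admissible M X0 X L (t+s) x z \<gamma> u" and t: "0 \<le> t" and s: "0 \<le> s"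
  shows "admissible M X0 X L t x (\<gamma> t) \<gamma> u"
    and "admissible M X0 X L s (\<gamma> t) z (\<lambda>r. \<gamma> (r+t)) (\<lambda>r. u (r+t))"
    and "integral {0..t+s} (\<lambda>r. L (\<gamma> r, u r)) = integral {0..t} (\<lambda>r. L (\<gamma> r, u r))
           + integral {0..s} (\<lambda>r. L (\<gamma> (r+t), u (r+t)))"
proof -
  define F where "F = flow X0 X \<gamma> u"
  have uI: "u absolutely_integrable_on {0..t+s}"
    and FI: "F absolutely_integrable_on {0..t+s}"
    and LI: "(\<lambda>r. L (\<gamma> r, u r)) absolutely_integrable_on {0..t+s}"
    and inM: "\<forall>r\<in>{0..t+s}. \<gamma> r \<in> M" and g0: "\<gamma> 0 = x" and g1: "\<gamma> (t+s) = z"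
    and eq: "\<forall>r\<in>{0..t+s}. \<gamma> r = x + integral {0..r} F"
    using A unfolding admissible_alt F_def by blast+
  note su = split_int[OF uI t s] and sF = split_int[OF FI t s] and sL = split_int[OF LI t s]
  have inM1: "\<forall>r\<in>{0..t}. \<gamma> r \<in> M" "\<forall>r\<in>{0..t}. \<gamma> r = x + integral {0..r} F"
    using inM eq s by auto
  show "admissible M X0 X L t x (\<gamma> t) \<gamma> u"
    unfolding admissible_alt F_def[symmetric] using su(1) sF(1) sL(1) inM1 g0 by blast
  have eq2: "\<gamma> (r+t) = \<gamma> t + integral {0..r} (\<lambda>q. F (q+t))" if r: "r \<in> {0..s}" for r
  proof -
    have "F absolutely_integrable_on {0..t+r}"
      using absolutely_integrable_on_subinterval[OF FI] r by auto
    note ss = split_int[OF this t] 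
    have "r+t \<in> {0..t+s}" using r t by auto
    then have "\<gamma> (r+t) = x + integral {0..r+t} F" using eq by blast
    also have "\<dots> = x + integral {0..t} F + integral {0..r} (\<lambda>q. F (q+t))"
      using ss(3) r by (simp add: add.commute)
    also have "x + integral {0..t} F = \<gamma> t" using eq t s by auto
    finally show ?thesis .
  qed
  have inM2: "\<forall>r\<in>{0..s}. \<gamma> (r+t) \<in> M" using inM t by auto
  have g1': "\<gamma> (s+t) = z" using g1 by (simp add: add.commute)
  show "admissible M X0 X L s (\<gamma> t) z (\<lambda>r. \<gamma> (r+t)) (\<lambda>r. u (r+t))"
    unfolding admissible_alt flow_shift F_def[symmetric] using su(2) sF(2) sL(2) inM2 g1' eq2
    by simp
  show "integral {0..t+s} (\<lambda>r. L (\<gamma> r, u r)) = integral {0..t} (\<lambda>r. L (\<gamma> r, u r))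
           + integral {0..s} (\<lambda>r. L (\<gamma> (r+t), u (r+t)))"
    using sL(3) by simp
qed



lemma adm_concat:
  assumes A1: "admissible M X0 X L t x y \<gamma>1 u1" and A2: "admissible M X0 X L s y z \<gamma>2 u2"
    and t: "0 \<le> t" and s: "0 \<le> s"
  shows "admissible M X0 X L (t+s) x z (\<lambda>r. if r \<le> t then \<gamma>1 r else \<gamma>2 (r - t))
           (\<lambda>r. if r \<le> t then u1 r else u2 (r - t))"
    and "integral {0..t+s} (\<lambda>r. L ((if r \<le> t then \<gamma>1 r else \<gamma>2 (r - t)),
            (if r \<le> t then u1 r else u2 (r - t))))
         = integral {0..t} (\<lambda>r. L (\<gamma>1 r, u1 r)) + integral {0..s} (\<lambda>r. L (\<gamma>2 r, u2 r))"
proof -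
  define \<gamma> where "\<gamma> = (\<lambda>r. if r \<le> t then \<gamma>1 r else \<gamma>2 (r - t))"
  define u where "u = (\<lambda>r. if r \<le> t then u1 r else u2 (r - t))"
  define F1 where "F1 = flow X0 X \<gamma>1 u1"
  define F2 where "F2 = flow X0 X \<gamma>2 u2"
  have FF: "flow X0 X \<gamma> u = (\<lambda>r. if r \<le> t then F1 r else F2 (r - t))"
    unfolding \<gamma>_def u_def F1_def F2_def by (rule flow_if)
  have LL: "(\<lambda>r. L (\<gamma> r, u r)) = (\<lambda>r. if r \<le> t then L (\<gamma>1 r, u1 r) else L (\<gamma>2 (r - t), u2 (r - t)))"
    by (rule ext) (simp add: \<gamma>_def u_def)
  have u1I: "u1 absolutely_integrable_on {0..t}"
    and F1I: "F1 absolutely_integrable_on {0..t}"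
    and L1I: "(\<lambda>r. L (\<gamma>1 r, u1 r)) absolutely_integrable_on {0..t}"
    and inM1: "\<forall>r\<in>{0..t}. \<gamma>1 r \<in> M" and g10: "\<gamma>1 0 = x" and g11: "\<gamma>1 t = y"
    and eq1: "\<forall>r\<in>{0..t}. \<gamma>1 r = x + integral {0..r} F1"
    using A1 unfolding admissible_alt F1_def by blast+
  have u2I: "u2 absolutely_integrable_on {0..s}"
    and F2I: "F2 absolutely_integrable_on {0..s}"
    and L2I: "(\<lambda>r. L (\<gamma>2 r, u2 r)) absolutely_integrable_on {0..s}"
    and inM2: "\<forall>r\<in>{0..s}. \<gamma>2 r \<in> M" and g20: "\<gamma>2 0 = y" and g21: "\<gamma>2 s = z"
    and eq2: "\<forall>r\<in>{0..s}. \<gamma>2 r = y + integral {0..r} F2"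
    using A2 unfolding admissible_alt F2_def by blast+
  have uI: "u absolutely_integrable_on {0..t+s}"
    unfolding u_def by (rule concat_int(1)[OF u1I u2I t s])
  have FI: "(\<lambda>r. if r \<le> t then F1 r else F2 (r - t)) absolutely_integrable_on {0..t+s}"
    by (rule concat_int(1)[OF F1I F2I t s])
  have LI: "(\<lambda>r. L (\<gamma> r, u r)) absolutely_integrable_on {0..t+s}"
    unfolding LL by (rule concat_int(1)[OF L1I L2I t s])
  have inM: "\<forall>r\<in>{0..t+s}. \<gamma> r \<in> M"
  proof
    fix r assume r: "r \<in> {0..t+s}"
    show "\<gamma> r \<in> M"
    proof (cases "r \<le> t")
      case True then show ?thesis using inM1 r by (simp add: \<gamma>_def)
    next
      case False then have "r - t \<in> {0..s}" using r by auto
      then show ?thesis using inM2 False by (simp add: \<gamma>_def)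
    qed
  qed
  have e0: "\<gamma> 0 = x" using g10 t by (simp add: \<gamma>_def)
  have e1: "\<gamma> (t+s) = z"
  proof (cases "s = 0")
    case True then show ?thesis using g11 g20 g21 by (simp add: \<gamma>_def)
  next
    case False then show ?thesis using g21 s by (simp add: \<gamma>_def)
  qed
  have eq: "\<gamma> r = x + integral {0..r} (\<lambda>r. if r \<le> t then F1 r else F2 (r - t))"
    if r: "r \<in> {0..t+s}" for r
  proof (cases "r \<le> t")
    case True
    have "integral {0..r} (\<lambda>r. if r \<le> t then F1 r else F2 (r - t)) = integral {0..r} F1"
      by (rule integral_cong) (use True in auto)
    moreover have "\<gamma>1 r = x + integral {0..r} F1" using eq1 True r by simp
    ultimately show ?thesis using True by (simp add: \<gamma>_def)
  next
    case False
    have rt: "r - t \<in> {0..s}" using False r by auto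
    have F2I': "F2 absolutely_integrable_on {0..r-t}"
      using absolutely_integrable_on_subinterval[OF F2I] rt by auto
    have "integral {0..t + (r-t)} (\<lambda>r. if r \<le> t then F1 r else F2 (r - t))
           = integral {0..t} F1 + integral {0..r-t} F2"
      by (rule concat_int(2)[OF F1I F2I' t]) (use False in auto)
    then have "integral {0..r} (\<lambda>r. if r \<le> t then F1 r else F2 (r - t))
           = integral {0..t} F1 + integral {0..r-t} F2" by simp
    moreover have "\<gamma> r = y + integral {0..r-t} F2" using eq2 False rt by (simp add: \<gamma>_def)
    moreover have "y = x + integral {0..t} F1" using eq1 g11 t by auto
    ultimately show ?thesis by (simp add: algebra_simps)
  qed
  show "admissible M X0 X L (t+s) x z (\<lambda>r. if r \<le> t then \<gamma>1 r else \<gamma>2 (r - t))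
           (\<lambda>r. if r \<le> t then u1 r else u2 (r - t))"
    unfolding admissible_alt \<gamma>_def[symmetric] u_def[symmetric] FF
    using uI FI LI inM e0 e1 eq by blast
  show "integral {0..t+s} (\<lambda>r. L ((if r \<le> t then \<gamma>1 r else \<gamma>2 (r - t)),
            (if r \<le> t then u1 r else u2 (r - t))))
         = integral {0..t} (\<lambda>r. L (\<gamma>1 r, u1 r)) + integral {0..s} (\<lambda>r. L (\<gamma>2 r, u2 r))"
    using concat_int(2)[OF L1I L2I t s] LL unfolding \<gamma>_def u_def by simp
qed



abbreviation cr where "cr M X0 X L t x y \<equiv> real_of_ereal (ctrl_cost M X0 X L t x y)"

lemma cost_le:
  assumes A: "admissible M X0 X L t x y \<gamma> u" and f: "\<bar>ctrl_cost M X0 X L t x y\<bar> \<noteq> \<infinity>"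
  shows "cr M X0 X L t x y \<le> integral {0..t} (\<lambda>s. L (\<gamma> s, u s))"
proof -
  have "ctrl_cost M X0 X L t x y \<le> ereal (integral {0..t} (\<lambda>s. L (fst (\<gamma>, u) s, snd (\<gamma>, u) s)))"
    unfolding ctrl_cost_def by (rule INF_lower) (use A in simp)
  then show ?thesis using f by (cases "ctrl_cost M X0 X L t x y") auto
qed

lemma cost_approx:
  assumes f: "\<bar>ctrl_cost M X0 X L t x y\<bar> \<noteq> \<infinity>" and e: "e > 0"
  shows "\<exists>\<gamma> u. admissible M X0 X L t x y \<gamma> u \<and>
           integral {0..t} (\<lambda>s. L (\<gamma> s, u s)) < cr M X0 X L t x y + e"
proof -
  have "ctrl_cost M X0 X L t x y < ereal (cr M X0 X L t x y + e)"
    using f e by (cases "ctrl_cost M X0 X L t x y") auto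
  then obtain p where p: "p \<in> {(\<gamma>, u). admissible M X0 X L t x y \<gamma> u}"
    and "ereal (integral {0..t} (\<lambda>s. L (fst p s, snd p s))) < ereal (cr M X0 X L t x y + e)"
    unfolding ctrl_cost_def INF_less_iff by blast
  then show ?thesis by (cases p) auto
qed

lemma cost_sub:
  assumes fin: "\<And>t x y. t > 0 \<Longrightarrow> x \<in> M \<Longrightarrow> y \<in> M \<Longrightarrow> \<bar>ctrl_cost M X0 X L t x y\<bar> \<noteq> \<infinity>"
    and t: "t > 0" and s: "s > 0" and xyz: "x \<in> M" "y \<in> M" "z \<in> M"
  shows "cr M X0 X L (t+s) x z \<le> cr M X0 X L t x y + cr M X0 X L s y z"
proof (rule field_le_epsilon)
  fix e :: real assume e: "e > 0"
  obtain \<gamma>1 u1 where A1: "admissible M X0 X L t x y \<gamma>1 u1"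
    and c1: "integral {0..t} (\<lambda>s. L (\<gamma>1 s, u1 s)) < cr M X0 X L t x y + e/2"
    using cost_approx[OF fin[OF t xyz(1,2)], of "e/2"] e by auto
  obtain \<gamma>2 u2 where A2: "admissible M X0 X L s y z \<gamma>2 u2"
    and c2: "integral {0..s} (\<lambda>r. L (\<gamma>2 r, u2 r)) < cr M X0 X L s y z + e/2"
    using cost_approx[OF fin[OF s xyz(2,3)], of "e/2"] e by auto
  have t0: "0 \<le> t" and s0: "0 \<le> s" using t s by auto
  have ts: "t + s > 0" using t s by auto
  note C = adm_concat[OF A1 A2 t0 s0]
  have "cr M X0 X L (t+s) x z \<le> integral {0..t+s} (\<lambda>r. L ((if r \<le> t then \<gamma>1 r else \<gamma>2 (r - t)),
            (if r \<le> t then u1 r else u2 (r - t))))"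
    using cost_le[OF C(1) fin[OF ts xyz(1,3)]] by simp
  also have "\<dots> = integral {0..t} (\<lambda>r. L (\<gamma>1 r, u1 r)) + integral {0..s} (\<lambda>r. L (\<gamma>2 r, u2 r))"
    by (rule C(2))
  finally show "cr M X0 X L (t+s) x z \<le> cr M X0 X L t x y + cr M X0 X L s y z + e"
    using c1 c2 by simp
qed

lemma cost_sup:
  assumes fin: "\<And>t x y. t > 0 \<Longrightarrow> x \<in> M \<Longrightarrow> y \<in> M \<Longrightarrow> \<bar>ctrl_cost M X0 X L t x y\<bar> \<noteq> \<infinity>"
    and t: "t > 0" and s: "s > 0" and xz: "x \<in> M" "z \<in> M" and e: "e > 0"
  shows "\<exists>y\<in>M. cr M X0 X L t x y + cr M X0 X L s y z \<le> cr M X0 X L (t+s) x z + e"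
proof -
  obtain \<gamma> u where A: "admissible M X0 X L (t+s) x z \<gamma> u"
    and c: "integral {0..t+s} (\<lambda>r. L (\<gamma> r, u r)) < cr M X0 X L (t+s) x z + e"
    using cost_approx[OF fin[of "t+s" x z] e] t s xz by auto
  have t0: "0 \<le> t" and s0: "0 \<le> s" using t s by auto
  note S = adm_split[OF A t0 s0]
  have "\<forall>r\<in>{0..t+s}. \<gamma> r \<in> M" using A unfolding admissible_alt by blast
  then have yM: "\<gamma> t \<in> M" using t s by auto
  have "cr M X0 X L t x (\<gamma> t) \<le> integral {0..t} (\<lambda>r. L (\<gamma> r, u r))"
    by (rule cost_le[OF S(1) fin[OF t xz(1) yM]])
  moreover have "cr M X0 X L s (\<gamma> t) z \<le> integral {0..s} (\<lambda>r. L (\<gamma> (r+t), u (r+t)))"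
    by (rule cost_le[OF S(2) fin[OF s yM xz(2)]])
  ultimately have "cr M X0 X L t x (\<gamma> t) + cr M X0 X L s (\<gamma> t) z \<le> integral {0..t+s} (\<lambda>r. L (\<gamma> r, u r))"
    using S(3) t s by linarith
  then show ?thesis using c yM by (intro bexI[of _ "\<gamma> t"]) auto
qed



lemma fekete_like:
  fixes m :: "real \<Rightarrow> real" and D :: real
  assumes super: "\<And>t s. t > 0 \<Longrightarrow> s > 0 \<Longrightarrow> m t + m s \<le> m (t+s)"
    and quasi: "\<And>t s. t > 0 \<Longrightarrow> s \<ge> 1 \<Longrightarrow> m (t+s) \<le> m t + m s + D"
    and bnd: "\<And>a b. 0 < a \<Longrightarrow> \<exists>B. \<forall>t\<in>{a..b}. m t \<le> B"
  shows "\<exists>h. \<forall>t\<ge>1. m t \<le> h * t \<and> h * t \<le> m t + D"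
proof -
  have mult: "real n * m T \<le> m (real n * T)" if "n \<ge> 1" "T > 0" for n T
    using that(1)
  proof (induction n rule: dec_induct)
    case base then show ?case by simp
  next
    case (step n)
    have "real (Suc n) * m T = real n * m T + m T" by (simp add: algebra_simps)
    also have "\<dots> \<le> m (real n * T) + m T" using step by simp
    also have "\<dots> \<le> m (real n * T + T)" using super[of "real n * T" T] step(1) that(2) by simp
    finally show ?case by (simp add: algebra_simps)
  qed
  have mult2: "m (real k * t) + D \<le> real k * (m t + D)" if "k \<ge> 1" "t \<ge> 1" for k t
    using that(1)
  proof (induction k rule: dec_induct)
    case base then show ?case by simp
  next
    case (step k)
    have "m (real k * t + t) \<le> m (real k * t) + m t + D"
      using quasi[of "real k * t" t] step(1) that(2) by simp
    then show ?case using step by (simp add: algebra_simps)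
  qed
  have key: "m T * t \<le> (m t + D) * T" if T: "T > 0" and t: "t \<ge> 1" for T t
  proof (rule ccontr)
    assume neg: "\<not> ?thesis"
    define f where "f = m t + D"
    define \<eta> where "\<eta> = m T - T * f / t"
    have eta: "\<eta> > 0" using neg t unfolding \<eta>_def f_def
      by (simp add: field_simps)
    obtain Bt where Bt: "\<forall>r\<in>{t..2*t}. m r \<le> Bt" using bnd[of t "2*t"] t by auto
    define C where "C = 2 * \<bar>f\<bar> + Bt"
    have bound: "real n * \<eta> \<le> C" if n: "n \<ge> 1" "real n * T \<ge> 2 * t" for n
    proof -
      define q where "q = real n * T / t - 1"
      have q1: "q \<ge> 1" using n t unfolding q_def by (simp add: field_simps)
      define k where "k = nat \<lfloor>q\<rfloor>"
      have kq: "real k \<le> q" "q < real k + 1" using q1 unfolding k_def by linarith+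
      have k1: "k \<ge> 1" using q1 unfolding k_def by linarith
      define r where "r = real n * T - real k * t"
      have rr: "t \<le> r" "r \<le> 2 * t"
      proof -
        have "real k * t \<le> q * t" using kq t by (simp add: mult_right_mono)
        moreover have "q * t = real n * T - t" using t unfolding q_def by (simp add: field_simps)
        moreover have "q * t < (real k + 1) * t" using kq t by (simp add: mult_strict_right_mono)
        ultimately show "t \<le> r" "r \<le> 2 * t" unfolding r_def by (auto simp: algebra_simps)
      qed
      have "real n * m T \<le> m (real n * T)" using mult n T by simp
      also have "real n * T = real k * t + r" unfolding r_def by simp
      also have "m (real k * t + r) \<le> m (real k * t) + m r + D"
        using quasi[of "real k * t" r] k1 t rr by simp
      also have "\<dots> \<le> real k * f + Bt"
      proof -
        have "m r \<le> Bt" using Bt rr by auto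
        then show ?thesis using mult2[OF k1 t] unfolding f_def by linarith
      qed
      finally have A: "real n * m T \<le> real k * f + Bt" .
      have "\<bar>real k - real n * T / t\<bar> \<le> 2" using kq unfolding q_def by linarith
      then have "(real k - real n * T / t) * f \<le> 2 * \<bar>f\<bar>"
        by (metis abs_ge_self abs_mult dual_order.trans mult_right_mono abs_ge_zero)
      then have "real k * f \<le> real n * T / t * f + 2 * \<bar>f\<bar>" by (simp add: algebra_simps)
      with A have "real n * m T \<le> real n * (T * f / t) + C" unfolding C_def by simp
      then show ?thesis unfolding \<eta>_def by (simp add: algebra_simps)
    qed
    define n where "n = nat \<lceil>max (2 * t / T) (C / \<eta>)\<rceil> + 1"
    have n1: "n \<ge> 1" unfolding n_def by simp
    have "real n \<ge> 2 * t / T" "real n > C / \<eta>" unfolding n_def by linarith+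
    then have "real n * T \<ge> 2 * t" "real n * \<eta> > C" using T eta by (simp_all add: field_simps)
    with bound[OF n1] show False by linarith
  qed
  define S where "S = {m T / T | T. T \<ge> 1}"
  have Sne: "S \<noteq> {}" unfolding S_def by auto
  have Sbdd: "\<forall>x\<in>S. x \<le> (m 1 + D) / 1"
    using key[of _ 1] unfolding S_def by (auto simp: field_simps)
  define h where "h = Sup S"
  have "m t \<le> h * t \<and> h * t \<le> m t + D" if t: "t \<ge> 1" for t
  proof
    have "m t / t \<le> h" unfolding h_def
      by (rule cSup_upper) (use t Sbdd in \<open>auto simp: S_def bdd_above_def\<close>)
    then show "m t \<le> h * t" using t by (simp add: field_simps)
    have "h \<le> (m t + D) / t" unfolding h_def
    proof (rule cSup_least[OF Sne])
      fix x assume "x \<in> S"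
      then obtain T where "T \<ge> 1" "x = m T / T" unfolding S_def by auto
      then have T: "T \<ge> 1" and x: "x = m T / T" by auto
      have k: "m T * t \<le> (m t + D) * T" using key[of T t] t T by simp
      have "x * t = (m T * t) / T" using x by simp
      also have "\<dots> \<le> ((m t + D) * T) / T" using k T by (intro divide_right_mono) auto
      also have "\<dots> = m t + D" using T by simp
      finally show "x \<le> (m t + D) / t" using t by (simp add: le_divide_eq)
    qed
    then show "h * t \<le> m t + D" using t by (simp add: field_simps)
  qed
  then show ?thesis by blast
qed



lemma key3:
  assumes fin: "\<And>t x y. t > 0 \<Longrightarrow> x \<in> M \<Longrightarrow> y \<in> M \<Longrightarrow> \<bar>ctrl_cost M X0 X L t x y\<bar> \<noteq> \<infinity>"
    and b: "b > 0" and t: "t > 2 * b" and pts: "x \<in> M" "y \<in> M" "x' \<in> M" "y' \<in> M" and e: "e > 0"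
  shows "\<exists>z\<in>M. \<exists>w\<in>M. cr M X0 X L t x' y' - cr M X0 X L t x y
            \<le> (cr M X0 X L b x' z - cr M X0 X L b x z) + (cr M X0 X L b w y' - cr M X0 X L b w y) + e"
proof -
  have tb: "t - b > 0" and t2b: "t - 2*b > 0" using b t by auto
  obtain z where z: "z \<in> M" and hz: "cr M X0 X L b x z + cr M X0 X L (t-b) z y \<le> cr M X0 X L (b + (t-b)) x y + e/2"
    using cost_sup[OF fin b tb pts(1,2), of "e/2"] e by auto
  obtain w where w: "w \<in> M" and hw: "cr M X0 X L (t-2*b) z w + cr M X0 X L b w y \<le> cr M X0 X L ((t-2*b) + b) z y + e/2"
    using cost_sup[OF fin t2b b z pts(2), of "e/2"] e by auto
  have s1: "cr M X0 X L (b + (t-b)) x' y' \<le> cr M X0 X L b x' z + cr M X0 X L (t-b) z y'"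
    by (rule cost_sub[OF fin b tb pts(3) z pts(4)])
  have s2: "cr M X0 X L ((t-2*b) + b) z y' \<le> cr M X0 X L (t-2*b) z w + cr M X0 X L b w y'"
    by (rule cost_sub[OF fin t2b b z w pts(4)])
  have r1: "b + (t - b) = t" by simp
  have r2: "(t-2*b) + b = t - b" by simp
  show ?thesis using hz hw s1 s2 z w unfolding r1 r2 by (intro bexI[of _ z] bexI[of _ w]) auto
qed



theorem mainTheorem10:
  fixes M :: "'a::euclidean_space set"
    and X0 :: "'a \<Rightarrow> 'a" and X :: "'m::finite \<Rightarrow> 'a \<Rightarrow> 'a"
    and L :: "'a \<times> (real^'m) \<Rightarrow> real"
  defines "c \<equiv> ctrl_cost M X0 X L"
  assumes M: "smooth_submanifold M" "compact M"
    and X0: "smooth_vector_field_on M X0"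
    and X: "\<And>i. smooth_vector_field_on M (X i)"
    and L: "C_inf_on UNIV L"
    and finite: "\<And>t x y. t > 0 \<Longrightarrow> x \<in> M \<Longrightarrow> y \<in> M \<Longrightarrow> \<bar>c t x y\<bar> \<noteq> \<infinity>"
    and cont: "continuous_on ({0<..} \<times> M \<times> M) (\<lambda>(t, x, y). real_of_ereal (c t x y))"
  shows "(\<forall>a>0. \<forall>p\<in>M \<times> M. \<forall>\<epsilon>>0. \<exists>\<delta>>0. \<forall>t\<ge>a. \<forall>q\<in>M \<times> M.
            dist q p < \<delta> \<longrightarrow>
            \<bar>real_of_ereal (c t (fst q) (snd q)) - real_of_ereal (c t (fst p) (snd p))\<bar> < \<epsilon>)
       \<and> (\<exists>h::real. \<forall>a>0. \<exists>K::real. \<forall>t\<ge>a. \<forall>x\<in>M. \<forall>y\<in>M.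
            \<bar>real_of_ereal (c t x y) - h * t\<bar> \<le> K)"
proof -
  define C where "C = (\<lambda>t x y. cr M X0 X L t x y)"
  have fin: "\<And>t x y. t > 0 \<Longrightarrow> x \<in> M \<Longrightarrow> y \<in> M \<Longrightarrow> \<bar>ctrl_cost M X0 X L t x y\<bar> \<noteq> \<infinity>"
    using finite unfolding c_def .
  have cont': "continuous_on ({0<..} \<times> M \<times> M) (\<lambda>(t, x, y). C t x y)"
    using cont unfolding c_def C_def .
  have cb: "continuous_on (M \<times> M) (\<lambda>p. C b (fst p) (snd p))" if b: "b > 0" for b
  proof -
    have "continuous_on (M \<times> M) ((\<lambda>(t, x, y). C t x y) \<circ> (\<lambda>p. (b, fst p, snd p)))"
    proof (rule continuous_on_compose)
      show "continuous_on (M \<times> M) (\<lambda>p. (b, fst p, snd p))" by (intro continuous_intros)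
      show "continuous_on ((\<lambda>p. (b, fst p, snd p)) ` (M \<times> M)) (\<lambda>(t, x, y). C t x y)"
        by (rule continuous_on_subset[OF cont']) (use b in auto)
    qed
    then show ?thesis by (simp add: o_def split_def)
  qed
  have cM: "compact (M \<times> M)" using M(2) by (simp add: compact_Times)
  have key: "\<exists>z\<in>M. \<exists>w\<in>M. C t x' y' - C t x y
            \<le> (C b x' z - C b x z) + (C b w y' - C b w y) + e"
    if "b > 0" "t > 2 * b" "x \<in> M" "y \<in> M" "x' \<in> M" "y' \<in> M" "e > 0" for b t x y x' y' e
    unfolding C_def by (rule key3[OF fin that])
  have bndI: "\<exists>B. \<forall>t\<in>{a..b}. \<forall>x\<in>M. \<forall>y\<in>M. \<bar>C t x y\<bar> \<le> B" if a: "a > 0" for a b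
  proof -
    have sub: "{a..b} \<times> M \<times> M \<subseteq> {0<..} \<times> M \<times> M" using a by auto
    have "compact ((\<lambda>(t, x, y). C t x y) ` ({a..b} \<times> M \<times> M))"
      by (rule compact_continuous_image[OF continuous_on_subset[OF cont' sub]])
        (simp add: compact_Times M(2))
    then have "bounded ((\<lambda>(t, x, y). C t x y) ` ({a..b} \<times> M \<times> M))"
      by (rule compact_imp_bounded)
    then obtain B where B: "\<And>z. z \<in> (\<lambda>(t, x, y). C t x y) ` ({a..b} \<times> M \<times> M) \<Longrightarrow> norm z \<le> B"
      unfolding bounded_iff by blast
    have "\<bar>C t x y\<bar> \<le> B" if "t \<in> {a..b}" "x \<in> M" "y \<in> M" for t x y
    proof -
      have "C t x y \<in> (\<lambda>(t, x, y). C t x y) ` ({a..b} \<times> M \<times> M)"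
        using that by (intro image_eqI[of _ _ "(t,x,y)"]) auto
      from B[OF this] show ?thesis by simp
    qed
    then show ?thesis by blast
  qed
  have eqC: "\<And>t x y. real_of_ereal (c t x y) = C t x y" by (simp add: c_def C_def)
  have P1: "\<forall>a>0. \<forall>p\<in>M \<times> M. \<forall>\<epsilon>>0. \<exists>\<delta>>0. \<forall>t\<ge>a. \<forall>q\<in>M \<times> M.
            dist q p < \<delta> \<longrightarrow> \<bar>C t (fst q) (snd q) - C t (fst p) (snd p)\<bar> < \<epsilon>"
  proof (intro allI impI ballI)
    fix a :: real and p :: "'a \<times> 'a" and \<epsilon> :: real
    assume a: "a > 0" and p: "p \<in> M \<times> M" and e: "\<epsilon> > 0"
    define b where "b = a / 3"
    have b: "b > 0" using a by (simp add: b_def)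
    have "uniformly_continuous_on (M \<times> M) (\<lambda>p. C b (fst p) (snd p))"
      by (rule compact_uniformly_continuous[OF cb[OF b] cM])
    then have uc: "\<forall>e>0. \<exists>d>0. \<forall>x\<in>M \<times> M. \<forall>x'\<in>M \<times> M. dist x' x < d \<longrightarrow>
        dist (C b (fst x') (snd x')) (C b (fst x) (snd x)) < e"
      unfolding uniformly_continuous_on_def .
    have e3: "\<epsilon>/3 > 0" using e by simp
    obtain d where d: "d > 0" and hd: "\<forall>x\<in>M \<times> M. \<forall>x'\<in>M \<times> M. dist x' x < d \<longrightarrow>
        dist (C b (fst x') (snd x')) (C b (fst x) (snd x)) < \<epsilon>/3"
      using uc e3 by blast
    show "\<exists>\<delta>>0. \<forall>t\<ge>a. \<forall>q\<in>M \<times> M. dist q p < \<delta> \<longrightarrow> \<bar>C t (fst q) (snd q) - C t (fst p) (snd p)\<bar> < \<epsilon>"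
    proof (intro exI[of _ d] conjI allI impI ballI)
      show "d > 0" by (rule d)
      fix t q assume t: "a \<le> t" and q: "q \<in> M \<times> M" and dq: "dist q p < d"
      obtain x y where pxy: "p = (x, y)" by (cases p)
      obtain x' y' where qxy: "q = (x', y')" by (cases q)
      have xy: "x \<in> M" "y \<in> M" "x' \<in> M" "y' \<in> M" using p q pxy qxy by auto
      have dx: "dist x' x < d" using dist_fst_le[of q p] dq pxy qxy by simp
      have dy: "dist y' y < d" using dist_snd_le[of q p] dq pxy qxy by simp
      have ux: "\<bar>C b x' z - C b x z\<bar> < \<epsilon>/3" if z: "z \<in> M" for z
      proof -
        have "dist (x', z) (x, z) < d" using dx by (simp add: dist_Pair_Pair)
        then have "dist (C b x' z) (C b x z) < \<epsilon>/3" using hd xy z by force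
        then show ?thesis by (simp add: dist_real_def)
      qed
      have uy: "\<bar>C b w y' - C b w y\<bar> < \<epsilon>/3" if w: "w \<in> M" for w
      proof -
        have "dist (w, y') (w, y) < d" using dy by (simp add: dist_Pair_Pair)
        then have "dist (C b w y') (C b w y) < \<epsilon>/3" using hd xy w by force
        then show ?thesis by (simp add: dist_real_def)
      qed
      have tb: "t > 2 * b" using t a by (simp add: b_def)
      obtain z w where zw: "z \<in> M" "w \<in> M" and h1: "C t x' y' - C t x y
            \<le> (C b x' z - C b x z) + (C b w y' - C b w y) + \<epsilon>/3"
        using key[OF b tb xy e3] by blast
      obtain z2 w2 where zw2: "z2 \<in> M" "w2 \<in> M" and h2: "C t x y - C t x' y'
            \<le> (C b x z2 - C b x' z2) + (C b w2 y - C b w2 y') + \<epsilon>/3"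
        using key[OF b tb xy(3,4,1,2) e3] by blast
      have "C t x' y' - C t x y < \<epsilon>" using h1 ux[OF zw(1)] uy[OF zw(2)] by linarith
      moreover have "C t x y - C t x' y' < \<epsilon>" using h2 ux[OF zw2(1)] uy[OF zw2(2)] by linarith
      ultimately show "\<bar>C t (fst q) (snd q) - C t (fst p) (snd p)\<bar> < \<epsilon>" using pxy qxy by simp
    qed
  qed
  have P2: "\<exists>h::real. \<forall>a>0. \<exists>K::real. \<forall>t\<ge>a. \<forall>x\<in>M. \<forall>y\<in>M. \<bar>C t x y - h * t\<bar> \<le> K"
  proof (cases "M = {}")
    case True then show ?thesis by auto
  next
    case False
    then obtain x0 where x0: "x0 \<in> M" by auto
    have ne: "M \<times> M \<noteq> {}" using x0 by auto
    obtain B3 where B3: "\<forall>t\<in>{1/3..1/3}. \<forall>x\<in>M. \<forall>y\<in>M. \<bar>C t x y\<bar> \<le> B3"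
      using bndI[of "1/3" "1/3"] by auto
    define D where "D = 4 * B3"
    have osc: "C t x' y' - C t x y \<le> D" if t1: "t \<ge> 1" and pts: "x \<in> M" "y \<in> M" "x' \<in> M" "y' \<in> M" for t x y x' y'
    proof (rule field_le_epsilon)
      fix e :: real assume e: "e > 0"
      have tb: "t > 2 * (1/3)" using t1 by simp
      have b3: "(1/3::real) > 0" by simp
      obtain z w where zw: "z \<in> M" "w \<in> M" and h1: "C t x' y' - C t x y
            \<le> (C (1/3) x' z - C (1/3) x z) + (C (1/3) w y' - C (1/3) w y) + e"
        using key[OF b3 tb pts e] by blast
      have "\<bar>C (1/3) x' z\<bar> \<le> B3" "\<bar>C (1/3) x z\<bar> \<le> B3" "\<bar>C (1/3) w y'\<bar> \<le> B3" "\<bar>C (1/3) w y\<bar> \<le> B3"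
        using B3 zw pts by auto
      then show "C t x' y' - C t x y \<le> D + e" using h1 unfolding D_def by linarith
    qed
    define P where "P t = (SOME p. p \<in> M \<times> M \<and> (\<forall>q\<in>M \<times> M. C t (fst p) (snd p) \<le> C t (fst q) (snd q)))" for t
    define m where "m t = C t (fst (P t)) (snd (P t))" for t
    have Pp: "P t \<in> M \<times> M \<and> (\<forall>q\<in>M \<times> M. C t (fst (P t)) (snd (P t)) \<le> C t (fst q) (snd q))"
      if t: "t > 0" for t
    proof -
      have "\<exists>p. p \<in> M \<times> M \<and> (\<forall>q\<in>M \<times> M. C t (fst p) (snd p) \<le> C t (fst q) (snd q))"
        using continuous_attains_inf[OF cM ne cb[OF t]] by blast
      then show ?thesis unfolding P_def by (rule someI_ex)
    qed
    have mle: "m t \<le> C t x y" if "t > 0" "x \<in> M" "y \<in> M" for t x y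
      using Pp[OF that(1)] that unfolding m_def by force
    have PM: "fst (P t) \<in> M" "snd (P t) \<in> M" if "t > 0" for t
      using Pp[OF that] by auto
    have mge: "C t x y \<le> m t + D" if "t \<ge> 1" "x \<in> M" "y \<in> M" for t x y
      using osc[OF that(1) PM[of t] that(2,3)] that(1) unfolding m_def by simp
    have super: "m t + m s \<le> m (t+s)" if t: "t > 0" and s: "s > 0" for t s
    proof (rule field_le_epsilon)
      fix e :: real assume e: "e > 0"
      have ts: "t + s > 0" using t s by simp
      obtain y where y: "y \<in> M" and hy: "C t (fst (P (t+s))) y + C s y (snd (P (t+s))) \<le> C (t+s) (fst (P (t+s))) (snd (P (t+s))) + e"
        using cost_sup[OF fin t s PM[OF ts] e] unfolding C_def by blast
      show "m t + m s \<le> m (t+s) + e"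
        using hy mle[OF t PM(1)[OF ts] y] mle[OF s y PM(2)[OF ts]] unfolding m_def[of "t+s"] by linarith
    qed
    have quasi: "m (t+s) \<le> m t + m s + D" if t: "t > 0" and s: "s \<ge> 1" for t s
    proof -
      have s0: "s > 0" using s by simp
      have ts: "t + s > 0" using t s by simp
      have "m (t+s) \<le> C (t+s) (fst (P t)) (fst (P t))" using mle[OF ts PM(1)[OF t] PM(1)[OF t]] .
      also have "\<dots> \<le> C t (fst (P t)) (snd (P t)) + C s (snd (P t)) (fst (P t))"
        unfolding C_def by (rule cost_sub[OF fin t s0 PM(1)[OF t] PM(2)[OF t] PM(1)[OF t]])
      also have "\<dots> \<le> m t + (m s + D)"
        using mge[OF s PM(2)[OF t] PM(1)[OF t]] unfolding m_def[of t] by simp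
      finally show ?thesis by simp
    qed
    have bnd: "\<exists>B. \<forall>t\<in>{a..b}. m t \<le> B" if a: "0 < a" for a b
    proof -
      obtain B where B: "\<forall>t\<in>{a..b}. \<forall>x\<in>M. \<forall>y\<in>M. \<bar>C t x y\<bar> \<le> B" using bndI[OF a] by blast
      have "m t \<le> B" if "t \<in> {a..b}" for t
        using mle[of t x0 x0] B that x0 a by fastforce
      then show ?thesis by blast
    qed
    obtain h where h: "\<forall>t\<ge>1. m t \<le> h * t \<and> h * t \<le> m t + D"
      using fekete_like[of m D, OF super quasi bnd] by blast
    have D0: "D \<ge> 0" using mle[of 1 x0 x0] mge[of 1 x0 x0] x0 by simp
    show ?thesis
    proof (rule exI[of _ h], intro allI impI)
      fix a :: real assume a: "a > 0"
      obtain Ba where Ba: "\<forall>t\<in>{min a 1..1}. \<forall>x\<in>M. \<forall>y\<in>M. \<bar>C t x y\<bar> \<le> Ba"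
        using bndI[of "min a 1" 1] a by auto
      have Ba0: "Ba \<ge> 0" using Ba x0 by (meson abs_ge_zero atLeastAtMost_iff dual_order.trans min.cobounded2 order_refl)
      show "\<exists>K. \<forall>t\<ge>a. \<forall>x\<in>M. \<forall>y\<in>M. \<bar>C t x y - h * t\<bar> \<le> K"
      proof (intro exI[of _ "2 * D + Ba + \<bar>h\<bar>"] allI impI ballI)
        fix t x y assume t: "a \<le> t" and x: "x \<in> M" and y: "y \<in> M"
        show "\<bar>C t x y - h * t\<bar> \<le> 2 * D + Ba + \<bar>h\<bar>"
        proof (cases "t \<ge> 1")
          case True
          have "m t \<le> C t x y" "C t x y \<le> m t + D" using mle[of t x y] mge[OF True x y] True x y by auto
          moreover have "m t \<le> h * t" "h * t \<le> m t + D" using h True by auto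
          ultimately show ?thesis using D0 Ba0 by (simp add: abs_le_iff) linarith
        next
          case False
          have "\<bar>C t x y\<bar> \<le> Ba" using Ba t False x y by auto
          moreover have "\<bar>h * t\<bar> \<le> \<bar>h\<bar>" using False t a by (simp add: abs_mult mult_left_le)
          ultimately show ?thesis using D0 by linarith
        qed
      qed
    qed
  qed
  show ?thesis unfolding eqC using P1 P2 by blast
qed


end
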